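(* Let $\mathcal{H}$ be a complex Hilbert space. For a density matrix $\rho$ on $\mathcal{H}$ and a projection $\hat P$ on $\mathcal{H}$, define the truth value $\nu(\hat P;\rho)$ by assigning to each pair $(V,r)$ with $V\in\mathcal{V}(\mathcal{H})$, $r\in(0,1]$ the set $$\nu(\hat P;\rho)(V,r):=\{(V',r')\mid V'\subseteq V,\ 0<r'\leq r,\ \mathrm{tr}(\rho\,\delta(\hat P)_{V'})\geq r'\}.$$ Then these truth values separate density matrices: if $\rho_1,\rho_2$ are density matrices with $\nu(\hat P;\rho_1)=\nu(\hat P;\rho_2)$ for every projection $\hat P$ on $\mathcal{H}$, then $\rho_1=\rho_2$.
   Context: $\mathcal{V}(\mathcal{H})$ is the set of non-trivial commutative von Neumann subalgebras of $B(\mathcal{H})$ containing the identity operator, ordered by inclusion. For $V'\in\mathcal{V}(\mathcal{H})$ and a projection $\hat P$, $\delta(\hat P)_{V'}:=\bigwedge\{\hat Q\mid\hat Q\text{ a projection in }V',\ \hat Q\geq\hat P\}$ (the smallest projection in $V'$ dominating $\hat P$). A density matrix is a positive trace-class operator of trace one. (These $\nu(\hat P;\rho)$ are the truth values, in the sheaf topos over $\mathcal{V}(\mathcal{H})_A\times(0,1)_L$, of the proposition represented by $\hat P$ in the state $\rho$.) *)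

theory Defs
  imports "HOL-Analysis.Analysis"
begin

text \<open>Every complex Hilbert space is unitarily isomorphic to ell2(I) for some index
set I (its Hilbert dimension); we model H as ell2 over an arbitrary type 'i.\<close>

typedef 'i ell2 = "{f :: 'i \<Rightarrow> complex. (\<lambda>i. (cmod (f i))\<^sup>2) summable_on UNIV}"
  by (rule exI[of _ "\<lambda>_. 0"]) simp

definition ell2_plus :: "'i ell2 \<Rightarrow> 'i ell2 \<Rightarrow> 'i ell2" where
  "ell2_plus x y = Abs_ell2 (\<lambda>i. Rep_ell2 x i + Rep_ell2 y i)"

definition ell2_scale :: "complex \<Rightarrow> 'i ell2 \<Rightarrow> 'i ell2" where
  "ell2_scale c x = Abs_ell2 (\<lambda>i. c * Rep_ell2 x i)"

definition ell2_inner :: "'i ell2 \<Rightarrow> 'i ell2 \<Rightarrow> complex" where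
  "ell2_inner x y = (\<Sum>\<^sub>\<infinity>i. cnj (Rep_ell2 x i) * Rep_ell2 y i)"

definition ell2_norm :: "'i ell2 \<Rightarrow> real" where
  "ell2_norm x = sqrt (Re (ell2_inner x x))"

definition ket :: "'i \<Rightarrow> 'i ell2" where
  "ket i = Abs_ell2 (\<lambda>j. if j = i then 1 else 0)"

definition bounded_op :: "('i ell2 \<Rightarrow> 'i ell2) \<Rightarrow> bool" where
  "bounded_op A \<longleftrightarrow>
     (\<forall>x y. A (ell2_plus x y) = ell2_plus (A x) (A y)) \<and>
     (\<forall>c x. A (ell2_scale c x) = ell2_scale c (A x)) \<and>
     (\<exists>K. \<forall>x. ell2_norm (A x) \<le> K * ell2_norm x)"

definition is_adjoint :: "('i ell2 \<Rightarrow> 'i ell2) \<Rightarrow> ('i ell2 \<Rightarrow> 'i ell2) \<Rightarrow> bool" where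
  "is_adjoint B A \<longleftrightarrow> (\<forall>x y. ell2_inner (B x) y = ell2_inner x (A y))"

definition is_projection :: "('i ell2 \<Rightarrow> 'i ell2) \<Rightarrow> bool" where
  "is_projection P \<longleftrightarrow> bounded_op P \<and> P \<circ> P = P \<and> is_adjoint P P"

definition proj_le :: "('i ell2 \<Rightarrow> 'i ell2) \<Rightarrow> ('i ell2 \<Rightarrow> 'i ell2) \<Rightarrow> bool" where
  "proj_le P Q \<longleftrightarrow> Q \<circ> P = P"

text \<open>Trace w.r.t. the standard basis (for trace-class operators the sum converges
absolutely and is basis independent).\<close>
definition trace :: "('i ell2 \<Rightarrow> 'i ell2) \<Rightarrow> complex" where
  "trace A = (\<Sum>\<^sub>\<infinity>i. ell2_inner (ket i) (A (ket i)))"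

text \<open>Density matrix: positive trace-class operator of trace one. For a positive
operator, being trace class means the diagonal sum is finite.\<close>
definition density_matrix :: "('i ell2 \<Rightarrow> 'i ell2) \<Rightarrow> bool" where
  "density_matrix \<rho> \<longleftrightarrow>
     bounded_op \<rho> \<and>
     (\<forall>x. ell2_inner x (\<rho> x) \<in> \<real> \<and> 0 \<le> Re (ell2_inner x (\<rho> x))) \<and>
     ((\<lambda>i. ell2_inner (ket i) (\<rho> (ket i))) has_sum 1) UNIV"

definition commutant :: "('i ell2 \<Rightarrow> 'i ell2) set \<Rightarrow> ('i ell2 \<Rightarrow> 'i ell2) set" where
  "commutant S = {A. bounded_op A \<and> (\<forall>B\<in>S. A \<circ> B = B \<circ> A)}"

text \<open>Von Neumann algebra: a self-adjoint set of bounded operators equal to its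
double commutant (equivalently, by the bicommutant theorem, a weakly closed
unital *-subalgebra of B(H)).\<close>
definition von_neumann_algebra :: "('i ell2 \<Rightarrow> 'i ell2) set \<Rightarrow> bool" where
  "von_neumann_algebra V \<longleftrightarrow>
     V \<subseteq> {A. bounded_op A} \<and>
     (\<forall>A\<in>V. \<exists>B\<in>V. is_adjoint B A) \<and>
     commutant (commutant V) = V"

definition scalar_ops :: "('i ell2 \<Rightarrow> 'i ell2) set" where
  "scalar_ops = {(\<lambda>x. ell2_scale c x) | c. True}"

text \<open>V(H): non-trivial commutative von Neumann subalgebras containing the identity.\<close>
definition contexts :: "('i ell2 \<Rightarrow> 'i ell2) set set" where
  "contexts = {V. von_neumann_algebra V \<and> id \<in> V \<and> V \<noteq> scalar_ops \<and>
                  (\<forall>A\<in>V. \<forall>B\<in>V. A \<circ> B = B \<circ> A)}"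

text \<open>delta(P)_V: smallest projection in V dominating P.\<close>
definition daseinisation ::
  "('i ell2 \<Rightarrow> 'i ell2) \<Rightarrow> ('i ell2 \<Rightarrow> 'i ell2) set \<Rightarrow> ('i ell2 \<Rightarrow> 'i ell2)" where
  "daseinisation P V = (THE Q. Q \<in> V \<and> is_projection Q \<and> proj_le P Q \<and>
      (\<forall>Q'\<in>V. is_projection Q' \<and> proj_le P Q' \<longrightarrow> proj_le Q Q'))"

definition truth_value ::
  "('i ell2 \<Rightarrow> 'i ell2) \<Rightarrow> ('i ell2 \<Rightarrow> 'i ell2) \<Rightarrow>
   ('i ell2 \<Rightarrow> 'i ell2) set \<times> real \<Rightarrow> (('i ell2 \<Rightarrow> 'i ell2) set \<times> real) set" where
  "truth_value P \<rho> = (\<lambda>(V, r). {(V', r'). V' \<in> contexts \<and> V' \<subseteq> V \<and> 0 < r' \<and> r' \<le> r \<and>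
       Re (trace (\<rho> \<circ> daseinisation P V')) \<ge> r'})"

end

theory Submission imports Defs begin

lemma L2_Rep: "(\<lambda>i. (cmod (Rep_ell2 x i))\<^sup>2) summable_on UNIV"
  using Rep_ell2[of x] by simp

lemma real_abs_summ: "(f::'a\<Rightarrow>real) summable_on A \<Longrightarrow> Infinite_Sum.abs_summable_on f A"
  using summable_on_iff_abs_summable_on_real by blast

lemma L2_add:
  assumes "(\<lambda>i. (cmod (f i))\<^sup>2) summable_on UNIV" "(\<lambda>i. (cmod (g i))\<^sup>2) summable_on UNIV"
  shows "(\<lambda>i. (cmod (f i + g i))\<^sup>2) summable_on UNIV"
proof -
  have s: "(\<lambda>i. 2*(cmod (f i))\<^sup>2 + 2*(cmod (g i))\<^sup>2) summable_on UNIV"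
    using assms by (intro summable_on_add summable_on_cmult_right)
  have "Infinite_Sum.abs_summable_on (\<lambda>i. (cmod (f i + g i))\<^sup>2) UNIV"
  proof (rule Infinite_Sum.abs_summable_on_comparison_test[OF real_abs_summ[OF s]])
    fix i
    have "cmod (f i + g i) \<le> cmod (f i) + cmod (g i)" by (rule norm_triangle_ineq)
    hence "(cmod (f i + g i))\<^sup>2 \<le> (cmod (f i) + cmod (g i))\<^sup>2"
      by (simp add: power_mono)
    also have "\<dots> \<le> 2*(cmod (f i))\<^sup>2 + 2*(cmod (g i))\<^sup>2"
    proof -
      have "(cmod (f i) + cmod (g i))\<^sup>2 + (cmod (f i) - cmod (g i))\<^sup>2 = 2*(cmod (f i))\<^sup>2 + 2*(cmod (g i))\<^sup>2"
        by (simp add: power2_eq_square algebra_simps)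
      moreover have "0 \<le> (cmod (f i) - cmod (g i))\<^sup>2" by simp
      ultimately show ?thesis by linarith
    qed
    finally show "norm ((cmod (f i + g i))\<^sup>2) \<le> norm (2*(cmod (f i))\<^sup>2 + 2*(cmod (g i))\<^sup>2)"
      by simp
  qed
  thus ?thesis by (rule Infinite_Sum.abs_summable_summable)
qed

lemma L2_scale:
  assumes "(\<lambda>i. (cmod (f i))\<^sup>2) summable_on UNIV"
  shows "(\<lambda>i. (cmod (c * f i))\<^sup>2) summable_on UNIV"
  using summable_on_cmult_right[OF assms, of "(cmod c)^2"] by (simp add: norm_mult power_mult_distrib)

lemma Rep_plus[simp]: "Rep_ell2 (ell2_plus x y) = (\<lambda>i. Rep_ell2 x i + Rep_ell2 y i)"
  unfolding ell2_plus_def by (rule Abs_ell2_inverse) (simp add: L2_add L2_Rep)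

lemma Rep_scale[simp]: "Rep_ell2 (ell2_scale c x) = (\<lambda>i. c * Rep_ell2 x i)"
  unfolding ell2_scale_def by (rule Abs_ell2_inverse) (simp add: L2_scale L2_Rep)

lemma Rep_ket[simp]: "Rep_ell2 (ket j) = (\<lambda>i. if i = j then 1 else 0)"
proof -
  have "(\<lambda>i. (cmod (if i = j then (1::complex) else 0))\<^sup>2) summable_on {j}" by simp
  hence "(\<lambda>i. (cmod (if i = j then (1::complex) else 0))\<^sup>2) summable_on UNIV"
    by (rule summable_on_cong_neutral[THEN iffD1, rotated -1]) auto
  thus ?thesis unfolding ket_def by (intro Abs_ell2_inverse) simp
qed

lemma ell2_eqI: "(\<And>i. Rep_ell2 x i = Rep_ell2 y i) \<Longrightarrow> x = y"
  by (simp add: Rep_ell2_inject[symmetric] fun_eq_iff)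

lemma inner_abs_summable: "Infinite_Sum.abs_summable_on (\<lambda>i. cnj (Rep_ell2 x i) * Rep_ell2 y i) UNIV"
proof -
  have s: "(\<lambda>i. (cmod (Rep_ell2 x i))\<^sup>2 + (cmod (Rep_ell2 y i))\<^sup>2) summable_on UNIV"
    by (intro summable_on_add L2_Rep)
  show ?thesis
  proof (rule Infinite_Sum.abs_summable_on_comparison_test[OF real_abs_summ[OF s]])
    fix i
    have "cmod (Rep_ell2 x i) * cmod (Rep_ell2 y i) \<le> (cmod (Rep_ell2 x i))\<^sup>2 + (cmod (Rep_ell2 y i))\<^sup>2"
    proof -
      let ?a = "cmod (Rep_ell2 x i)" and ?b = "cmod (Rep_ell2 y i)"
      have "?a\<^sup>2 + ?b\<^sup>2 - 2 * (?a * ?b) = (?a - ?b)\<^sup>2" by (simp add: power2_eq_square algebra_simps)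
      moreover have "0 \<le> (?a - ?b)\<^sup>2" "0 \<le> ?a * ?b" by simp_all
      ultimately show ?thesis by linarith
    qed
    thus "norm (cnj (Rep_ell2 x i) * Rep_ell2 y i) \<le> norm ((cmod (Rep_ell2 x i))\<^sup>2 + (cmod (Rep_ell2 y i))\<^sup>2)"
      by (simp add: norm_mult)
  qed
qed

lemma inner_summable: "(\<lambda>i. cnj (Rep_ell2 x i) * Rep_ell2 y i) summable_on UNIV"
  by (rule Infinite_Sum.abs_summable_summable[OF inner_abs_summable])

abbreviation ip where "ip \<equiv> ell2_inner"

lemma ip_plus_right: "ip x (ell2_plus y z) = ip x y + ip x z"
  unfolding ell2_inner_def by (simp add: distrib_left infsum_add inner_summable)

lemma ip_scale_right: "ip x (ell2_scale c y) = c * ip x y"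
  unfolding ell2_inner_def by (simp add: mult.left_commute infsum_cmult_right inner_summable)

lemma ip_cnj: "ip y x = cnj (ip x y)"
  unfolding ell2_inner_def infsum_cnj[symmetric] by (simp add: mult.commute)

lemma ip_plus_left: "ip (ell2_plus y z) x = ip y x + ip z x"
proof -
  have "ip (ell2_plus y z) x = cnj (ip x (ell2_plus y z))" by (rule ip_cnj)
  also have "\<dots> = cnj (ip x y) + cnj (ip x z)" by (simp add: ip_plus_right)
  finally show ?thesis by (simp add: ip_cnj[of x y] ip_cnj[of x z])
qed

lemma ip_scale_left: "ip (ell2_scale c y) x = cnj c * ip y x"
proof -
  have "ip (ell2_scale c y) x = cnj (ip x (ell2_scale c y))" by (rule ip_cnj)
  also have "\<dots> = cnj c * cnj (ip x y)" by (simp add: ip_scale_right)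
  finally show ?thesis by (simp add: ip_cnj[of x y])
qed

lemmas ip_simps = ip_plus_right ip_scale_right ip_plus_left ip_scale_left

lemma ip_ket_left[simp]: "ip (ket j) y = Rep_ell2 y j"
proof -
  have "ip (ket j) y = infsum (\<lambda>i. cnj (Rep_ell2 (ket j) i) * Rep_ell2 y i) {j}"
    unfolding ell2_inner_def by (rule infsum_cong_neutral) auto
  thus ?thesis by simp
qed

lemma ip_ket_right[simp]: "ip y (ket j) = cnj (Rep_ell2 y j)"
  using ip_cnj[of "ket j" y] by simp

lemma ip_self_Re: "Re (ip x x) = infsum (\<lambda>i. (cmod (Rep_ell2 x i))\<^sup>2) UNIV"
proof -
  have "Re (ip x x) = infsum (\<lambda>i. Re (cnj (Rep_ell2 x i) * Rep_ell2 x i)) UNIV"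
    unfolding ell2_inner_def by (rule infsum_Re[OF inner_summable, symmetric])
  also have "\<dots> = infsum (\<lambda>i. (cmod (Rep_ell2 x i))\<^sup>2) UNIV"
    by (rule infsum_cong) (metis Re_complex_of_real complex_norm_square mult.commute)
  finally show ?thesis .
qed

lemma ip_self_nonneg: "0 \<le> Re (ip x x)"
  unfolding ip_self_Re by (rule infsum_nonneg) simp

lemma ip_self_Im: "Im (ip x x) = 0"
  using ip_cnj[of x x] by (simp add: complex_eq_iff)

lemma ip_self_real: "ip x x = complex_of_real (Re (ip x x))"
  using ip_self_Im[of x] by (simp add: complex_eq_iff)

lemma ip_self_zero: assumes "Re (ip x x) = 0" shows "Rep_ell2 x i = 0"
proof -
  have "(\<lambda>i. (cmod (Rep_ell2 x i))\<^sup>2) i = 0"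
    using assms unfolding ip_self_Re
    by (intro nonneg_infsum_le_0D[OF _ L2_Rep]) auto
  thus ?thesis by simp
qed

lemma ip_eq_ext: assumes "\<And>i. ip (ket i) x = ip (ket i) y" shows "x = y"
  using assms by (intro ell2_eqI) simp


definition lin :: "('i ell2 \<Rightarrow> 'i ell2) \<Rightarrow> bool" where
  "lin A \<longleftrightarrow> (\<forall>x y. A (ell2_plus x y) = ell2_plus (A x) (A y)) \<and>
     (\<forall>c x. A (ell2_scale c x) = ell2_scale c (A x))"

lemma bounded_lin: "bounded_op A \<Longrightarrow> lin A"
  unfolding bounded_op_def lin_def by blast

lemma lin_id: "lin id" by (simp add: lin_def)

lemma lin_plus: "lin A \<Longrightarrow> A (ell2_plus x y) = ell2_plus (A x) (A y)"
  and lin_scale: "lin A \<Longrightarrow> A (ell2_scale c x) = ell2_scale c (A x)"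
  unfolding lin_def by blast+

lemma expand:
  assumes "lin A"
  shows "ip (ell2_plus u (ell2_scale c w)) (A (ell2_plus u (ell2_scale c w)))
     = ip u (A u) + c * ip u (A w) + cnj c * ip w (A u) + cnj c * c * ip w (A w)"
  using assms by (simp add: lin_plus lin_scale ip_simps algebra_simps)

lemma scalar_cs:
  fixes A B :: real and C :: complex
  assumes A: "0 \<le> A" and B: "0 \<le> B" and H: "\<And>c. 0 \<le> A + 2 * Re (c * C) + (cmod c)\<^sup>2 * B"
  shows "(cmod C)\<^sup>2 \<le> A * B"
proof (cases "B = 0")
  case True
  show ?thesis
  proof (rule ccontr)
    assume "\<not> ?thesis"
    hence C: "C \<noteq> 0" using True by simp
    define s where "s = (A + 1) / (cmod C)\<^sup>2"
    have h1: "0 \<le> A + 2 * Re (complex_of_real (-s) * cnj C * C)"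
      using H[of "complex_of_real (-s) * cnj C"] True by simp
    have h2: "Re (complex_of_real (-s) * cnj C * C) = - (s * (cmod C)\<^sup>2)"
      by (simp add: mult.assoc complex_mult_cnj cmod_power2 del: complex_mult_cnj) (simp add: power2_eq_square)
    have h3: "s * (cmod C)\<^sup>2 = A + 1" using C by (simp add: s_def)
    show False using h1 h2 h3 A by linarith
  qed
next
  case False
  hence Bp: "0 < B" using B by simp
  have "0 \<le> A + 2 * Re (complex_of_real (-1/B) * cnj C * C) + (cmod (complex_of_real (-1/B) * cnj C))\<^sup>2 * B"
    using H[of "complex_of_real (-1/B) * cnj C"] by simp
  also have "Re (complex_of_real (-1/B) * cnj C * C) = - (cmod C)\<^sup>2 / B"
    using Bp by (simp add: mult.assoc complex_mult_cnj cmod_power2 del: complex_mult_cnj) (simp add: power2_eq_square field_simps)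
  also have "(cmod (complex_of_real (-1/B) * cnj C))\<^sup>2 * B = (cmod C)\<^sup>2 / B"
    using Bp by (simp add: norm_mult norm_divide power_mult_distrib power2_eq_square)
  finally have "0 \<le> A - (cmod C)\<^sup>2 / B" by simp
  hence "(cmod C)\<^sup>2 / B \<le> A" by simp
  thus ?thesis using Bp by (simp add: divide_le_eq mult.commute)
qed

definition psd :: "('i ell2 \<Rightarrow> 'i ell2) \<Rightarrow> bool" where
  "psd A \<longleftrightarrow> lin A \<and> (\<forall>x. ip x (A x) \<in> \<real> \<and> 0 \<le> Re (ip x (A x)))"

lemma psd_id: "psd id"
  using ip_self_nonneg ip_self_real lin_id unfolding psd_def
  by (metis Reals_of_real id_apply)

lemma density_psd: "density_matrix \<rho> \<Longrightarrow> psd \<rho>"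
  unfolding density_matrix_def psd_def using bounded_lin by blast

lemma psd_herm:
  assumes "psd A" shows "ip w (A u) = cnj (ip u (A w))"
proof -
  have L: "lin A" and R: "\<And>x. Im (ip x (A x)) = 0" using assms unfolding psd_def
    by (auto simp: complex_is_Real_iff)
  note e1 = expand[OF L, of u 1 w]
  note e2 = expand[OF L, of u \<i> w]
  have 1: "Im (ip u (A w) + ip w (A u)) = 0" using arg_cong[OF e1, of Im] R[of u] R[of w] R[of "ell2_plus u (ell2_scale 1 w)"]
    by simp
  have 2: "Re (ip u (A w) - ip w (A u)) = 0" using arg_cong[OF e2, of Im] R[of u] R[of w] R[of "ell2_plus u (ell2_scale \<i> w)"]
    by simp
  show ?thesis using 1 2 by (simp add: complex_eq_iff)
qed

lemma psd_cs:
  assumes "psd A" shows "(cmod (ip u (A w)))\<^sup>2 \<le> Re (ip u (A u)) * Re (ip w (A w))"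
proof (rule scalar_cs)
  have L: "lin A" and P: "\<And>x. 0 \<le> Re (ip x (A x))" using assms unfolding psd_def by auto
  show "0 \<le> Re (ip u (A u))" "0 \<le> Re (ip w (A w))" by (rule P)+
  fix c
  have "0 \<le> Re (ip (ell2_plus u (ell2_scale c w)) (A (ell2_plus u (ell2_scale c w))))" by (rule P)
  also have "\<dots> = Re (ip u (A u)) + 2 * Re (c * ip u (A w)) + (cmod c)\<^sup>2 * Re (ip w (A w))"
    unfolding expand[OF L] psd_herm[OF assms, of w u]
    by (simp add: complex_mult_cnj cmod_power2 del: complex_mult_cnj) (simp add: algebra_simps power2_eq_square)
  finally show "0 \<le> Re (ip u (A u)) + 2 * Re (c * ip u (A w)) + (cmod c)\<^sup>2 * Re (ip w (A w))" .
qed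

lemma ip_cs: "(cmod (ip u w))\<^sup>2 \<le> Re (ip u u) * Re (ip w w)"
  using psd_cs[OF psd_id] by simp


lemma scale_one[simp]: "ell2_scale 1 w = w"
  by (rule ell2_eqI) simp

abbreviation q where "q x \<equiv> Re (ip x x)"

lemma q_scale: "q (ell2_scale c u) = (cmod c)\<^sup>2 * q u"
proof -
  have "ip (ell2_scale c u) (ell2_scale c u) = (cnj c * c) * ip u u" by (simp add: ip_simps)
  also have "\<dots> = complex_of_real ((cmod c)\<^sup>2 * q u)"
  proof -
    have "cnj c * c = (complex_of_real (cmod c))\<^sup>2" by (metis complex_norm_square of_real_power mult.commute)
    thus ?thesis by (subst ip_self_real) simp
  qed
  finally show ?thesis by simp
qed

lemma q_plus_le: "q (ell2_plus u w) \<le> 2 * q u + 2 * q w"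
proof -
  note e1 = arg_cong[OF expand[OF lin_id, of u 1 w], of Re]
  note e2 = arg_cong[OF expand[OF lin_id, of u "-1" w], of Re]
  have "0 \<le> q (ell2_plus u (ell2_scale (-1) w))" by (rule ip_self_nonneg)
  thus ?thesis using e1 e2 by simp
qed

lemma bounded_opI:
  assumes "lin A" "0 \<le> K" "\<And>x. q (A x) \<le> K * q x"
  shows "bounded_op A"
proof -
  have "ell2_norm (A x) \<le> sqrt K * ell2_norm x" for x
  proof -
    have "ell2_norm (A x) \<le> sqrt (K * q x)"
      unfolding ell2_norm_def by (rule real_sqrt_le_mono[OF assms(3)])
    thus ?thesis by (simp add: ell2_norm_def real_sqrt_mult)
  qed
  thus ?thesis using assms(1) unfolding bounded_op_def lin_def by blast
qed

definition r1 :: "'i ell2 \<Rightarrow> 'i ell2 \<Rightarrow> 'i ell2 \<Rightarrow> 'i ell2" where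
  "r1 z y v = ell2_scale (ip z v) y"

lemma lin_r1: "lin (r1 z y)"
  unfolding lin_def r1_def by (auto intro!: ell2_eqI simp: ip_simps algebra_simps)

lemma q_r1: "q (r1 z y v) \<le> (q z * q y) * q v"
proof -
  have "q (r1 z y v) = (cmod (ip z v))\<^sup>2 * q y" unfolding r1_def by (rule q_scale)
  also have "\<dots> \<le> (q z * q v) * q y"
    by (rule mult_right_mono[OF ip_cs ip_self_nonneg])
  finally show ?thesis by (simp add: algebra_simps)
qed

lemma bounded_r1: "bounded_op (r1 z y)"
  by (rule bounded_opI[OF lin_r1 _ q_r1]) (simp add: ip_self_nonneg)

lemma proj_r1: assumes "ip x x = 1" shows "is_projection (r1 x x)"
  unfolding is_projection_def
proof (intro conjI bounded_r1)
  show "r1 x x \<circ> r1 x x = r1 x x"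
    by (rule ext, rule ell2_eqI) (simp add: r1_def ip_simps assms)
  show "is_adjoint (r1 x x) (r1 x x)"
    unfolding is_adjoint_def r1_def by (simp add: ip_simps ip_cnj[of x])
qed

definition opx :: "'i ell2 \<Rightarrow> complex \<Rightarrow> complex \<Rightarrow> 'i ell2 \<Rightarrow> 'i ell2" where
  "opx x a b v = ell2_plus (ell2_scale a (r1 x x v)) (ell2_scale b (ell2_plus v (ell2_scale (-1) (r1 x x v))))"

lemma Rep_opx: "Rep_ell2 (opx x a b v) i = a * ip x v * Rep_ell2 x i + b * (Rep_ell2 v i - ip x v * Rep_ell2 x i)"
  by (simp add: opx_def r1_def)

lemma ip_opx: "ip y (opx x a b v) = a * ip x v * ip y x + b * (ip y v - ip x v * ip y x)"
  by (simp add: opx_def r1_def ip_simps algebra_simps)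

lemma lin_opx: "lin (opx x a b)"
  unfolding lin_def by (auto intro!: ell2_eqI simp: Rep_opx ip_simps algebra_simps)

lemma q_r1x: "ip x x = 1 \<Longrightarrow> q (r1 x x v) \<le> q v"
  using q_r1[of x x v] by simp

lemma bounded_opx: assumes "ip x x = 1" shows "bounded_op (opx x a b)"
proof (rule bounded_opI[OF lin_opx])
  show "0 \<le> 2 * (cmod a)\<^sup>2 + 8 * (cmod b)\<^sup>2" by simp
  fix v
  have h1: "q (r1 x x v) \<le> q v" by (rule q_r1x[OF assms])
  have h2: "q (ell2_plus v (ell2_scale (-1) (r1 x x v))) \<le> 4 * q v"
    using q_plus_le[of v "ell2_scale (-1) (r1 x x v)"] h1 by (simp add: q_scale)
  have "q (opx x a b v) \<le> 2 * ((cmod a)\<^sup>2 * q (r1 x x v)) + 2 * ((cmod b)\<^sup>2 * q (ell2_plus v (ell2_scale (-1) (r1 x x v))))"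
    unfolding opx_def using q_plus_le[of "ell2_scale a (r1 x x v)" "ell2_scale b (ell2_plus v (ell2_scale (-1) (r1 x x v)))"]
    by (simp only: q_scale)
  also have "\<dots> \<le> 2 * ((cmod a)\<^sup>2 * q v) + 2 * ((cmod b)\<^sup>2 * (4 * q v))"
    by (intro add_mono mult_left_mono h1 h2) simp_all
  finally show "q (opx x a b v) \<le> (2 * (cmod a)\<^sup>2 + 8 * (cmod b)\<^sup>2) * q v"
    by (simp add: algebra_simps)
qed

lemma opx_comm: assumes "ip x x = 1"
  shows "opx x a1 b1 (opx x a2 b2 v) = opx x a2 b2 (opx x a1 b1 v)"
  by (rule ell2_eqI) (simp only: Rep_opx ip_opx assms, simp add: algebra_simps)

lemma opx_comm': "ip x x = 1 \<Longrightarrow> opx x a1 b1 \<circ> opx x a2 b2 = opx x a2 b2 \<circ> opx x a1 b1"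
  by (rule ext) (simp add: opx_comm)

lemma r1_opx: "ip x x = 1 \<Longrightarrow> r1 x x = opx x 1 0"
  by (rule ext, rule ell2_eqI) (simp add: Rep_opx r1_def)

lemma id_opx: "id = opx x 1 1"
  by (rule ext, rule ell2_eqI) (simp add: Rep_opx)

lemma adj_opx: "is_adjoint (opx x (cnj a) (cnj b)) (opx x a b)"
  unfolding is_adjoint_def opx_def r1_def by (simp add: ip_simps ip_cnj[of x] algebra_simps)

definition Vx :: "'i ell2 \<Rightarrow> ('i ell2 \<Rightarrow> 'i ell2) set" where
  "Vx x = {B. \<exists>a b. B = opx x a b}"

lemma r1_in_comm: assumes "ip x x = 1" shows "r1 x x \<in> commutant (Vx x)"
  unfolding commutant_def Vx_def using bounded_opx[OF assms] r1_opx[OF assms] opx_comm'[OF assms] by auto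

lemma R_in_comm:
  assumes x1: "ip x x = 1" and "ip x y = 0" and "ip x y0 = 0"
  shows "r1 y0 y \<in> commutant (Vx x)"
proof -
  have y0x: "ip y0 x = 0" using assms(3) ip_cnj[of x y0] by simp
  have "r1 y0 y \<circ> opx x a b = opx x a b \<circ> r1 y0 y" for a b
    by (rule ext, rule ell2_eqI) (simp add: Rep_opx ip_opx y0x r1_def ip_simps assms(2) algebra_simps)
  thus ?thesis unfolding commutant_def Vx_def using bounded_r1 by auto
qed

lemma opx_in_CC: assumes x1: "ip x x = 1" shows "opx x a b \<in> commutant (commutant (Vx x))"
proof -
  have "opx x a b \<circ> A = A \<circ> opx x a b" if A: "A \<in> commutant (Vx x)" for A
  proof -
    have LA: "lin A" using A unfolding commutant_def by (auto intro: bounded_lin)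
    have "A \<circ> r1 x x = r1 x x \<circ> A" using A r1_opx[OF x1] unfolding commutant_def Vx_def by auto
    hence AP: "A (r1 x x v) = r1 x x (A v)" for v by (metis comp_apply)
    show ?thesis by (rule ext) (simp add: opx_def lin_plus[OF LA] lin_scale[OF LA] AP)
  qed
  thus ?thesis unfolding commutant_def using bounded_opx[OF x1] by auto
qed

lemma CC_sub:
  assumes x1: "ip x x = 1" and y0: "ip x y0 = 0" "ip y0 y0 \<noteq> 0"
    and B: "B \<in> commutant (commutant (Vx x))"
  shows "B \<in> Vx x"
proof -
  have LB: "lin B" using B unfolding commutant_def by (auto intro: bounded_lin)
  have comm: "B \<circ> A = A \<circ> B" if "A \<in> commutant (Vx x)" for A
    using B that unfolding commutant_def by auto
  have hP: "B (r1 x x v) = r1 x x (B v)" for v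
    using comm[OF r1_in_comm[OF x1]] by (metis comp_apply)
  define a where "a = ip x (B x)"
  define b where "b = ip y0 (B y0) / ip y0 y0"
  have rxx: "r1 x x x = x" by (rule ell2_eqI) (simp add: r1_def x1)
  have hx: "B x = ell2_scale a x"
    using hP[of x] unfolding rxx by (simp add: r1_def a_def)
  have hy: "B y = ell2_scale b y" if yp: "ip x y = 0" for y
  proof -
    have "B (r1 y0 y y0) = r1 y0 y (B y0)"
      using comm[OF R_in_comm[OF x1 yp y0(1)]] by (metis comp_apply)
    hence e: "ell2_scale (ip y0 y0) (B y) = ell2_scale (ip y0 (B y0)) y"
      by (simp add: r1_def lin_scale[OF LB])
    show ?thesis
    proof (rule ell2_eqI)
      fix i
      have "ip y0 y0 * Rep_ell2 (B y) i = ip y0 (B y0) * Rep_ell2 y i"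
        using arg_cong[OF e, of "\<lambda>z. Rep_ell2 z i"] by simp
      thus "Rep_ell2 (B y) i = Rep_ell2 (ell2_scale b y) i"
        using y0(2) by (simp add: b_def field_simps)
    qed
  qed
  have "B v = opx x a b v" for v
  proof -
    define w where "w = ell2_plus v (ell2_scale (-1) (r1 x x v))"
    have wp: "ip x w = 0" by (simp add: w_def r1_def ip_simps x1)
    have veq: "v = ell2_plus (ell2_scale (ip x v) x) w"
      by (rule ell2_eqI) (simp add: w_def r1_def)
    have "B v = B (ell2_plus (ell2_scale (ip x v) x) w)" by (rule arg_cong[OF veq])
    also have "\<dots> = ell2_plus (ell2_scale (ip x v) (ell2_scale a x)) (ell2_scale b w)"
      by (simp add: lin_plus[OF LB] lin_scale[OF LB] hx hy[OF wp])
    also have "\<dots> = opx x a b v"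
      by (rule ell2_eqI) (simp add: Rep_opx w_def r1_def algebra_simps)
    finally show ?thesis .
  qed
  thus ?thesis unfolding Vx_def by blast
qed

lemma Vx_context:
  assumes x1: "ip x x = 1" and y0: "ip x y0 = 0" "ip y0 y0 \<noteq> 0"
  shows "Vx x \<in> contexts"
proof -
  have vn: "von_neumann_algebra (Vx x)"
    unfolding von_neumann_algebra_def
  proof (intro conjI)
    show "Vx x \<subseteq> {A. bounded_op A}" unfolding Vx_def using bounded_opx[OF x1] by auto
    show "\<forall>A\<in>Vx x. \<exists>B\<in>Vx x. is_adjoint B A" unfolding Vx_def using adj_opx by blast
    show "commutant (commutant (Vx x)) = Vx x"
      using CC_sub[OF x1 y0] opx_in_CC[OF x1] unfolding Vx_def by blast
  qed
  have idV: "id \<in> Vx x" unfolding Vx_def using id_opx by blast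
  have ns: "Vx x \<noteq> scalar_ops"
  proof
    assume "Vx x = scalar_ops"
    hence "r1 x x \<in> scalar_ops" using r1_opx[OF x1] unfolding Vx_def by auto
    then obtain c where c: "r1 x x = (\<lambda>v. ell2_scale c v)" unfolding scalar_ops_def by auto
    have "ip x (r1 x x x) = ip x (ell2_scale c x)" using c by simp
    hence c1: "c = 1" by (simp add: r1_def ip_simps x1)
    have "ip y0 (r1 x x y0) = ip y0 (ell2_scale c y0)" using c by simp
    thus False using y0 c1 by (simp add: r1_def ip_simps)
  qed
  have cm: "\<forall>A\<in>Vx x. \<forall>B\<in>Vx x. A \<circ> B = B \<circ> A"
    unfolding Vx_def using opx_comm'[OF x1] by blast
  show ?thesis unfolding contexts_def using vn idV ns cm by blast
qed

lemma das_r1: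
  assumes x1: "ip x x = 1"
  shows "daseinisation (r1 x x) (Vx x) = r1 x x"
  unfolding daseinisation_def
proof (rule the_equality)
  let ?P = "r1 x x"
  have PV: "?P \<in> Vx x" unfolding Vx_def using r1_opx[OF x1] by blast
  have PP: "is_projection ?P" by (rule proj_r1[OF x1])
  have Pidem: "?P \<circ> ?P = ?P" using PP unfolding is_projection_def by blast
  show "?P \<in> Vx x \<and> is_projection ?P \<and> proj_le ?P ?P \<and>
      (\<forall>Q'\<in>Vx x. is_projection Q' \<and> proj_le ?P Q' \<longrightarrow> proj_le ?P Q')"
    using PV PP Pidem unfolding proj_le_def by blast
  fix Q
  assume H: "Q \<in> Vx x \<and> is_projection Q \<and> proj_le ?P Q \<and>
      (\<forall>Q'\<in>Vx x. is_projection Q' \<and> proj_le ?P Q' \<longrightarrow> proj_le Q Q')"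
  have QP: "Q \<circ> ?P = ?P" using H unfolding proj_le_def by blast
  have PQ: "?P \<circ> Q = Q" using H PV PP Pidem unfolding proj_le_def by blast
  have aQ: "ip (Q u) v = ip u (Q v)" for u v using H unfolding is_projection_def is_adjoint_def by blast
  have aP: "ip (?P u) v = ip u (?P v)" for u v using PP unfolding is_projection_def is_adjoint_def by blast
  have QPv: "Q (?P v) = ?P v" for v using QP by (metis comp_apply)
  have PQv: "?P (Q v) = Q v" for v using PQ by (metis comp_apply)
  have key: "ip (Q u) v = ip (?P u) v" for u v
  proof -
    have "ip (Q u) v = ip (?P (Q u)) v" by (simp add: PQv)
    also have "\<dots> = ip (Q u) (?P v)" by (rule aP)
    also have "\<dots> = ip u (Q (?P v))" by (rule aQ)
    also have "\<dots> = ip u (?P v)" by (simp add: QPv)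
    also have "\<dots> = ip (?P u) v" by (rule aP[symmetric])
    finally show ?thesis .
  qed
  show "Q = ?P"
  proof (rule ext, rule ip_eq_ext)
    fix u i
    show "ip (ket i) (Q u) = ip (ket i) (?P u)"
      using key[of u "ket i"] ip_cnj[of "Q u" "ket i"] ip_cnj[of "?P u" "ket i"] by simp
  qed
qed

lemma trace_r1: assumes L: "lin \<rho>" shows "trace (\<rho> \<circ> r1 x x) = ip x (\<rho> x)"
proof -
  have "trace (\<rho> \<circ> r1 x x) = infsum (\<lambda>i. cnj (Rep_ell2 x i) * Rep_ell2 (\<rho> x) i) UNIV"
    by (simp add: trace_def r1_def lin_scale[OF L])
  also have "\<dots> = ip x (\<rho> x)" by (simp add: ell2_inner_def)
  finally show ?thesis .
qed

lemma dens_bound: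
  assumes D: "density_matrix \<rho>" and x1: "ip x x = 1"
  shows "Re (ip x (\<rho> x)) \<le> 1"
proof -
  have P: "psd \<rho>" by (rule density_psd[OF D])
  define t where "t = Re (ip x (\<rho> x))"
  define d where "d i = Re (ip (ket i) (\<rho> (ket i)))" for i
  have hd: "(d has_sum 1) UNIV"
    using has_sum_Re[where f="\<lambda>i. ip (ket i) (\<rho> (ket i))" and a=1 and M=UNIV] D
    unfolding density_matrix_def d_def by simp
  have t0: "0 \<le> t" using P unfolding psd_def t_def by blast
  have h1: "(cmod (Rep_ell2 (\<rho> x) i))\<^sup>2 \<le> d i * t" for i
    using psd_cs[OF P, of "ket i" x] unfolding d_def t_def by simp
  have sd: "(\<lambda>i. d i * t) summable_on UNIV"
    using hd by (intro summable_on_cmult_left) (auto simp: summable_on_def)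
  have h2: "q (\<rho> x) \<le> t"
  proof -
    have "q (\<rho> x) \<le> infsum (\<lambda>i. d i * t) UNIV"
      unfolding ip_self_Re by (rule infsum_mono[OF L2_Rep sd h1])
    also have "infsum (\<lambda>i. d i * t) UNIV = 1 * t"
      by (rule infsumI[OF has_sum_cmult_left[OF hd]])
    finally show ?thesis by simp
  qed
  have h3: "(cmod (ip x (\<rho> x)))\<^sup>2 \<le> q (\<rho> x)"
    using ip_cs[of x "\<rho> x"] x1 by simp
  have "t \<le> cmod (ip x (\<rho> x))" unfolding t_def by (rule complex_Re_le_cmod)
  hence "t * t \<le> (cmod (ip x (\<rho> x)))\<^sup>2"
    using t0 by (simp add: power2_eq_square mult_mono)
  hence tt: "t * t \<le> t" using h2 h3 by linarith
  show ?thesis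
  proof (rule ccontr)
    assume "\<not> ?thesis"
    hence "1 < t" by (simp add: t_def)
    hence "t * 1 < t * t" using t0 by (intro mult_strict_left_mono) auto
    thus False using tt by simp
  qed
qed

lemma qform_from_unit:
  assumes L1: "lin A1" and L2: "lin A2" and U: "\<And>x. ip x x = 1 \<Longrightarrow> ip x (A1 x) = ip x (A2 x)"
  shows "ip v (A1 v) = ip v (A2 v)"
proof (cases "q v = 0")
  case True
  have v0: "v = ell2_scale 0 v" by (rule ell2_eqI) (simp add: ip_self_zero[OF True])
  have "ip v (A1 v) = ip v (A1 (ell2_scale 0 v))" by (subst v0[symmetric]) simp
  also have "\<dots> = 0" by (simp add: lin_scale[OF L1] ip_simps)
  also have "0 = ip v (A2 (ell2_scale 0 v))" by (simp add: lin_scale[OF L2] ip_simps)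
  also have "\<dots> = ip v (A2 v)" by (subst v0[symmetric]) simp
  finally show ?thesis .
next
  case False
  hence qp: "0 < q v" using ip_self_nonneg[of v] by simp
  define s where "s = 1 / sqrt (q v)"
  have sne: "s \<noteq> 0" using qp by (simp add: s_def)
  have ss: "s * s * q v = 1" using qp by (simp add: s_def)
  define x where "x = ell2_scale (complex_of_real s) v"
  have "ip x x = complex_of_real (s * s) * ip v v" by (simp add: x_def ip_simps)
  also have "\<dots> = complex_of_real (s * s * q v)" by (subst ip_self_real) simp
  finally have x1: "ip x x = 1" using ss by simp
  have "complex_of_real (s * s) * ip v (A1 v) = ip x (A1 x)"
    by (simp add: x_def lin_scale[OF L1] ip_simps)
  also have "\<dots> = ip x (A2 x)" by (rule U[OF x1])
  also have "\<dots> = complex_of_real (s * s) * ip v (A2 v)"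
    by (simp add: x_def lin_scale[OF L2] ip_simps)
  finally show ?thesis using sne by simp
qed

lemma polar:
  assumes L1: "lin A1" and L2: "lin A2" and Q: "\<And>v. ip v (A1 v) = ip v (A2 v)"
  shows "A1 = A2"
proof -
  have fe: "ip u (A1 w) = ip u (A2 w)" for u w
  proof -
    have E1: "ip u (A1 w) + ip w (A1 u) = ip u (A2 w) + ip w (A2 u)"
      using expand[OF L1, of u 1 w] expand[OF L2, of u 1 w] Q[of u] Q[of w]
        Q[of "ell2_plus u (ell2_scale 1 w)"] by simp
    have "\<i> * (ip u (A1 w) - ip w (A1 u)) = \<i> * (ip u (A2 w) - ip w (A2 u))"
      using expand[OF L1, of u \<i> w] expand[OF L2, of u \<i> w] Q[of u] Q[of w]
        Q[of "ell2_plus u (ell2_scale \<i> w)"] by (simp add: algebra_simps)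
    hence E2: "ip u (A1 w) - ip w (A1 u) = ip u (A2 w) - ip w (A2 u)" by simp
    have "(ip u (A1 w) + ip w (A1 u)) + (ip u (A1 w) - ip w (A1 u)) = (ip u (A2 w) + ip w (A2 u)) + (ip u (A2 w) - ip w (A2 u))"
      using E1 E2 by simp
    thus ?thesis by simp
  qed
  show ?thesis by (rule ext, rule ip_eq_ext) (rule fe)
qed

lemma exists_perp:
  fixes x :: "'i ell2" and j k :: 'i
  assumes "j \<noteq> k"
  shows "\<exists>y0. ip x y0 = 0 \<and> ip y0 y0 \<noteq> 0"
proof (cases "Rep_ell2 x j = 0")
  case True
  show ?thesis by (rule exI[of _ "ket j"]) (simp add: True)
next
  case False
  define y0 where "y0 = ell2_plus (ell2_scale (cnj (Rep_ell2 x k)) (ket j)) (ell2_scale (- cnj (Rep_ell2 x j)) (ket k))"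
  have "ip x y0 = 0" by (simp add: y0_def ip_simps)
  moreover have "ip y0 y0 \<noteq> 0"
  proof
    assume "ip y0 y0 = 0"
    hence "Rep_ell2 y0 k = 0" by (intro ip_self_zero) simp
    thus False using False assms by (simp add: y0_def)
  qed
  ultimately show ?thesis by blast
qed

lemma singleton_dens:
  assumes D: "density_matrix \<rho>" and j: "\<And>k::'i. k = j"
  shows "\<rho> v = ell2_scale (Rep_ell2 v j) (ket j)"
proof -
  have L: "lin \<rho>" using D unfolding density_matrix_def by (auto intro: bounded_lin)
  have U: "(UNIV :: 'i set) = {j}" using j by auto
  have hs: "((\<lambda>i. ip (ket i) (\<rho> (ket i))) has_sum 1) {j}" using D U unfolding density_matrix_def by simp
  have "((\<lambda>i. ip (ket i) (\<rho> (ket i))) has_sum (ip (ket j) (\<rho> (ket j)))) {j}"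
    using has_sum_finite[of "{j}" "\<lambda>i. ip (ket i) (\<rho> (ket i))"] by simp
  hence d1: "Rep_ell2 (\<rho> (ket j)) j = 1" using has_sum_unique[OF hs] by simp
  have kj: "\<rho> (ket j) = ket j"
  proof (rule ell2_eqI)
    fix i
    have "i = j" by (rule j)
    thus "Rep_ell2 (\<rho> (ket j)) i = Rep_ell2 (ket j) i" by (simp add: d1)
  qed
  have veq: "v = ell2_scale (Rep_ell2 v j) (ket j)"
  proof (rule ell2_eqI)
    fix i
    have "i = j" by (rule j)
    thus "Rep_ell2 v i = Rep_ell2 (ell2_scale (Rep_ell2 v j) (ket j)) i" by simp
  qed
  have "\<rho> v = \<rho> (ell2_scale (Rep_ell2 v j) (ket j))" by (rule arg_cong[OF veq])
  thus ?thesis by (simp add: lin_scale[OF L] kj)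
qed

theorem mainTheorem9:
  fixes \<rho>1 \<rho>2 :: "'i ell2 \<Rightarrow> 'i ell2"
  assumes "density_matrix \<rho>1" and "density_matrix \<rho>2"
    and "\<And>P. is_projection P \<Longrightarrow>
           (\<forall>V\<in>contexts. \<forall>r\<in>{0<..1}. truth_value P \<rho>1 (V, r) = truth_value P \<rho>2 (V, r))"
  shows "\<rho>1 = \<rho>2"
proof -
  note D1 = assms(1) and D2 = assms(2) and H = assms(3)
  have L1: "lin \<rho>1" using D1 unfolding density_matrix_def by (auto intro: bounded_lin)
  have L2: "lin \<rho>2" using D2 unfolding density_matrix_def by (auto intro: bounded_lin)
  show ?thesis
  proof (cases "\<exists>j k::'i. j \<noteq> k")
    case True
    then obtain j k :: 'i where jk: "j \<noteq> k" by blast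
    have U: "ip x (\<rho>1 x) = ip x (\<rho>2 x)" if x1: "ip x x = 1" for x
    proof -
      obtain y0 where y0: "ip x y0 = 0" "ip y0 y0 \<noteq> 0" using exists_perp[OF jk, of x] by blast
      have VC: "Vx x \<in> contexts" by (rule Vx_context[OF x1 y0])
      have tv: "truth_value (r1 x x) \<rho>1 (Vx x, 1) = truth_value (r1 x x) \<rho>2 (Vx x, 1)"
        using H[OF proj_r1[OF x1]] VC by auto
      have mem: "(Vx x, r) \<in> truth_value (r1 x x) \<rho> (Vx x, 1) \<longleftrightarrow> 0 < r \<and> r \<le> 1 \<and> r \<le> Re (ip x (\<rho> x))"
        if "lin \<rho>" for \<rho> r
        using VC by (simp add: truth_value_def das_r1[OF x1] trace_r1[OF that])
      define t1 where "t1 = Re (ip x (\<rho>1 x))"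
      define t2 where "t2 = Re (ip x (\<rho>2 x))"
      have eqv: "0 < r \<and> r \<le> 1 \<and> r \<le> t1 \<longleftrightarrow> 0 < r \<and> r \<le> 1 \<and> r \<le> t2" for r
        using mem[OF L1, of r] mem[OF L2, of r] tv unfolding t1_def t2_def by simp
      have a1: "0 \<le> t1" "t1 \<le> 1" using D1 dens_bound[OF D1 x1] unfolding t1_def density_matrix_def by auto
      have a2: "0 \<le> t2" "t2 \<le> 1" using D2 dens_bound[OF D2 x1] unfolding t2_def density_matrix_def by auto
      have "t1 = t2"
      proof (rule ccontr)
        assume "t1 \<noteq> t2"
        hence "t1 < t2 \<or> t2 < t1" by linarith
        thus False
        proof
          assume "t1 < t2" thus False using eqv[of t2] a1 a2 by linarith
        next
          assume "t2 < t1" thus False using eqv[of t1] a1 a2 by linarith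
        qed
      qed
      moreover have "ip x (\<rho>1 x) \<in> \<real>" "ip x (\<rho>2 x) \<in> \<real>"
        using D1 D2 unfolding density_matrix_def by auto
      ultimately show ?thesis unfolding t1_def t2_def by (simp add: complex_eq_iff complex_is_Real_iff)
    qed
    show ?thesis by (rule polar[OF L1 L2 qform_from_unit[OF L1 L2 U]])
  next
    case False
    hence j: "\<And>k::'i. k = undefined" by blast
    show ?thesis
      by (rule ext) (simp add: singleton_dens[OF D1 j] singleton_dens[OF D2 j])
  qed
qed

end
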